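(* Let $N\geq 1$ be an integer. Then for all $0<x<\pi/2$, \[ 3+\sum_{j=2}^{N}\frac{(2^{2j}-4)|B_{2j}|}{(2j)!}x^{2j}+\rho_N x^{2N+1}\tan x<2\left(\frac{x}{\sin x}\right)+\frac{x}{\tan x}<3+\sum_{j=2}^{N}\frac{(2^{2j}-4)|B_{2j}|}{(2j)!}x^{2j}+\varrho_N x^{2N+1}\tan x, \] with the best possible constants $\rho_N=0$ and $\varrho_N=\dfrac{4(2^{2N}-1)|B_{2N+2}|}{(2N+2)!}$.
   Context: The Bernoulli numbers $B_n$ are defined by $\frac{t}{e^t-1}=\sum_{n=0}^\infty B_n\frac{t^n}{n!}$ for $|t|<2\pi$. An empty sum is understood to be zero. *)

theory Defs
  imports Complex_Main
begin

text \<open>Bernoulli numbers, defined by the exponential generating function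
  t/(e^t - 1) = sum_n B_n t^n / n!  for 0 < |t| < 2 pi (the point t = 0 is
  excluded only because t/(e^t-1) is there defined by continuity).\<close>
definition bernoulli :: "nat \<Rightarrow> real" where
  "bernoulli = (THE B. \<forall>t::real. t \<noteq> 0 \<and> \<bar>t\<bar> < 2 * pi \<longrightarrow>
      (\<lambda>n. B n * t ^ n / fact n) sums (t / (exp t - 1)))"

definition poly_part :: "nat \<Rightarrow> real \<Rightarrow> real" where
  "poly_part N x = 3 + (\<Sum>j=2..N. (2^(2*j) - 4) * \<bar>bernoulli (2*j)\<bar> / fact (2*j) * x ^ (2*j))"

definition mid_expr :: "real \<Rightarrow> real" where
  "mid_expr x = 2 * (x / sin x) + x / tan x"

end

theory Submission
  imports Defs "HOL-Analysis.Analysis"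
begin


lemma digamma_refl:
  fixes z :: complex
  assumes z: "z \<notin> \<int>"
  shows "Digamma z - Digamma (1 - z) = - of_real pi * cot (of_real pi * z)"
proof -
  define G where "G w = Gamma w * Gamma (1 - w) * sin (of_real pi * w)" for w :: complex
  have z1: "z \<notin> \<int>\<^sub>\<le>\<^sub>0" using z nonpos_Ints_subset_Ints by blast
  have z2: "1 - z \<notin> \<int>" using z Ints_diff[of 1 "1 - z"] by auto
  hence z2': "1 - z \<notin> \<int>\<^sub>\<le>\<^sub>0" using nonpos_Ints_subset_Ints by blast
  have sn: "sin (of_real pi * z) \<noteq> 0"
    using z by (subst sin_eq_0) auto
  have Gc: "G w = of_real pi" if "w \<notin> \<int>" for w
  proof -
    have "sin (of_real pi * w) \<noteq> 0" using that by (subst sin_eq_0) auto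
    thus ?thesis unfolding G_def using Gamma_reflection_complex[of w] by (simp add: field_simps)
  qed
  have ev: "eventually (\<lambda>w. w \<in> UNIV - \<int>) (nhds z)"
    using z by (intro eventually_nhds_in_open) (auto simp: open_Diff closed_Ints)
  have ev2: "eventually (\<lambda>w. G w = of_real pi) (nhds z)"
    using ev by eventually_elim (auto intro: Gc)
  have d0: "(G has_field_derivative 0) (at z)"
    by (subst DERIV_cong_ev[OF refl ev2 refl]) (rule DERIV_const)
  have d1: "(G has_field_derivative
      (Gamma z * Digamma z * Gamma (1 - z) * sin (of_real pi * z)
       - Gamma z * (Gamma (1 - z) * Digamma (1 - z)) * sin (of_real pi * z)
       + Gamma z * Gamma (1 - z) * (cos (of_real pi * z) * of_real pi))) (at z)"
    unfolding G_def using z1 z2'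
    by (auto intro!: derivative_eq_intros simp: algebra_simps)
  have "Gamma z * Digamma z * Gamma (1 - z) * sin (of_real pi * z)
       - Gamma z * (Gamma (1 - z) * Digamma (1 - z)) * sin (of_real pi * z)
       + Gamma z * Gamma (1 - z) * (cos (of_real pi * z) * of_real pi) = 0"
    using DERIV_unique[OF d1 d0] .
  hence "(Gamma z * Gamma (1 - z)) * ((Digamma z - Digamma (1 - z)) * sin (of_real pi * z)
          + cos (of_real pi * z) * of_real pi) = 0"
    by (simp add: algebra_simps)
  moreover have "Gamma z * Gamma (1 - z) \<noteq> 0" using z1 z2' by (simp add: Gamma_nonzero)
  ultimately have "(Digamma z - Digamma (1 - z)) * sin (of_real pi * z) + cos (of_real pi * z) * of_real pi = 0"
    by simp
  hence "(Digamma z - Digamma (1 - z)) * sin (of_real pi * z) = - cos (of_real pi * z) * of_real pi"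
    by (simp add: algebra_simps)
  thus ?thesis using sn by (simp add: cot_def field_simps)
qed

lemma cot_pfd1:
  fixes z :: complex
  assumes z: "z \<notin> \<int>"
  shows "(\<lambda>k. 1/(z + of_nat k) - 1/(of_nat k + 1 - z)) sums (of_real pi * cot (of_real pi * z))"
proof -
  have z0: "z \<noteq> 0" using z by auto
  have z2: "1 - z \<notin> \<int>" using z Ints_diff[of 1 "1 - z"] by auto
  hence z20: "1 - z \<noteq> 0" by auto
  have s1: "(\<lambda>k. inverse (of_nat (Suc k)) - inverse (z + of_nat k)) sums (Digamma z + euler_mascheroni)"
    using summable_sums[OF summable_Digamma[OF z0]] by (simp add: Digamma_def)
  have s2: "(\<lambda>k. inverse (of_nat (Suc k)) - inverse ((1 - z) + of_nat k)) sums (Digamma (1 - z) + euler_mascheroni)"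
    using summable_sums[OF summable_Digamma[OF z20]] by (simp add: Digamma_def)
  from sums_diff[OF s2 s1]
  have "(\<lambda>k. 1/(z + of_nat k) - 1/(of_nat k + 1 - z)) sums (- (Digamma z - Digamma (1 - z)))"
    by (simp add: algebra_simps divide_inverse)
  thus ?thesis using digamma_refl[OF z] by simp
qed

lemma aux_e:
  fixes z a :: "'a::field"
  assumes "z + a \<noteq> 0" "a - z \<noteq> 0"
  shows "1/(z+a) = 2*z/(z^2-a^2) + 1/(a-z)"
proof -
  have f: "z^2 - a^2 = (z+a)*(z-a)" by (simp add: algebra_simps power2_eq_square)
  have h: "z - a \<noteq> 0" using assms(2) by (metis eq_iff_diff_eq_0)
  have "((z+a)*(-1))/((z+a)*(z-a)) = (-1)/(z-a)"
    using assms(1) by (rule mult_divide_mult_cancel_left)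
  also have "(-1)/(z-a) = 1/(a-z)" by (simp add: minus_divide_left[symmetric] divide_minus_right[symmetric])
  finally have "1/(a-z) = - (z+a)/((z+a)*(z-a))" by simp
  hence "2*z/((z+a)*(z-a)) + 1/(a-z) = (2*z - (z+a))/((z+a)*(z-a))"
    by (simp add: add_divide_distrib diff_divide_distrib)
  also have "2*z - (z+a) = z - a" by (simp add: algebra_simps)
  finally show ?thesis unfolding f using assms h by simp
qed

lemma cot_pfd2:
  fixes z :: complex
  assumes z: "z \<notin> \<int>"
  shows "(\<lambda>k. 2*z/(z^2 - (of_nat k + 1)^2)) sums (of_real pi * cot (of_real pi * z) - 1/z)"
proof -
  have nz1: "z + of_nat k \<noteq> 0" for k
  proof
    assume "z + of_nat k = 0" hence "z = - of_nat k" by (simp add: eq_neg_iff_add_eq_0)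
    thus False using z by (metis Ints_minus Ints_of_nat)
  qed
  have nz2: "of_nat k + 1 - z \<noteq> 0" for k
  proof
    assume "of_nat k + 1 - z = 0" hence "z = of_nat (Suc k)" by (simp add: algebra_simps)
    thus False using z by (metis Ints_of_nat)
  qed
  have nz3: "z^2 - (of_nat k + 1)^2 \<noteq> 0" for k
  proof -
    have "z^2 - (of_nat k + 1)^2 = (z + (of_nat k + 1)) * (z - (of_nat k + 1))"
      by (simp add: algebra_simps power2_eq_square)
    moreover have "z + (of_nat k + 1) \<noteq> 0" using nz1[of "Suc k"] by (simp add: add.assoc add.commute)
    moreover have "z - (of_nat k + 1) \<noteq> 0" using nz2[of k] by (auto simp: algebra_simps)
    ultimately show ?thesis by simp
  qed
  define L where "L = of_real pi * cot (of_real pi * z)"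
  have z0: "z \<noteq> 0" using z by auto
  have ps: "(\<Sum>k<Suc n. 1/(z + of_nat k) - 1/(of_nat k + 1 - z))
        = 1/z + (\<Sum>k<n. 2*z/(z^2 - (of_nat k + 1)^2)) - 1/(of_nat n + 1 - z)" for n
  proof (induction n)
    case 0 then show ?case by simp
  next
    case (Suc n)
    have e: "1/(z + (of_nat n + 1)) = 2*z/(z^2 - (of_nat n + 1)^2) + 1/(of_nat n + 1 - z)"
      using aux_e[of z "of_nat n + 1"] nz1[of "Suc n"] nz2[of n] by (simp add: add.commute add.left_commute)
    show ?case using Suc e by (simp add: algebra_simps)
  qed
  have "(\<lambda>n. \<Sum>k<n. 1/(z + of_nat k) - 1/(of_nat k + 1 - z)) \<longlonglongrightarrow> L"
    using cot_pfd1[OF z] by (simp add: sums_def L_def)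
  hence a: "(\<lambda>n. \<Sum>k<Suc n. 1/(z + of_nat k) - 1/(of_nat k + 1 - z)) \<longlonglongrightarrow> L"
    by (rule LIMSEQ_Suc)
  have b: "(\<lambda>n. inverse ((1 - z) + of_nat n)) \<longlonglongrightarrow> 0"
    by (intro filterlim_compose[OF tendsto_inverse_0] tendsto_add_filterlim_at_infinity[OF tendsto_const] tendsto_of_nat)
  have "(\<lambda>n. (\<Sum>k<Suc n. 1/(z + of_nat k) - 1/(of_nat k + 1 - z)) - 1/z + inverse ((1 - z) + of_nat n))
        \<longlonglongrightarrow> L - 1/z + 0"
    by (intro tendsto_intros a b)
  also have "(\<lambda>n. (\<Sum>k<Suc n. 1/(z + of_nat k) - 1/(of_nat k + 1 - z)) - 1/z + inverse ((1 - z) + of_nat n))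
        = (\<lambda>n. \<Sum>k<n. 2*z/(z^2 - (of_nat k + 1)^2))"
    by (rule ext, subst ps) (simp add: algebra_simps divide_inverse)
  finally show ?thesis by (simp add: sums_def L_def)
qed

lemma zcot_pfd:
  fixes z :: complex
  assumes z: "z / of_real pi \<notin> \<int>"
  shows "(\<lambda>k. 2*z^2/(z^2 - (of_nat k + 1)^2 * (of_real pi)^2)) sums (z * cot z - 1)"
proof -
  define w where "w = z / of_real pi"
  have pi0: "(of_real pi :: complex) \<noteq> 0" by simp
  have z0: "z \<noteq> 0" using z by auto
  have zw: "z = of_real pi * w" using pi0 by (simp add: w_def)
  from sums_mult[OF cot_pfd2[OF z[folded w_def]], of w]
  have "(\<lambda>k. w * (2*w/(w^2 - (of_nat k + 1)^2))) sums (w * (of_real pi * cot (of_real pi * w) - 1/w))" .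
  also have "w * (of_real pi * cot (of_real pi * w) - 1/w) = z * cot z - 1"
    using z0 by (simp add: zw field_simps)
  also have "(\<lambda>k. w * (2*w/(w^2 - (of_nat k + 1)^2))) = (\<lambda>k. 2*z^2/(z^2 - (of_nat k + 1)^2 * (of_real pi)^2))"
  proof
    fix k
    have "w * (2*w/(w^2 - (of_nat k + 1)^2)) = (of_real pi)^2 * (w * (2*w)) / ((of_real pi)^2 * (w^2 - (of_nat k + 1)^2))"
      using pi0 by simp
    also have "\<dots> = 2*z^2/(z^2 - (of_nat k + 1)^2 * (of_real pi)^2)"
      by (simp add: zw algebra_simps power2_eq_square)
    finally show "w * (2*w/(w^2 - (of_nat k + 1)^2)) = 2*z^2/(z^2 - (of_nat k + 1)^2 * (of_real pi)^2)" .
  qed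
  finally show ?thesis .
qed

lemma real_cot_pfd:
  fixes x :: real
  assumes "0 < x" "x < pi"
  shows "(\<lambda>k. 2*x^2/(x^2 - (real k + 1)^2 * pi^2)) sums (x * cot x - 1)"
proof -
  have ni: "x / pi \<notin> \<int>"
  proof
    assume "x / pi \<in> \<int>"
    then obtain m where m: "x / pi = of_int m" by (auto elim: Ints_cases)
    have "0 < x / pi" "x / pi < 1" using assms by (auto simp: field_simps)
    thus False using m by auto
  qed
  have "complex_of_real x / complex_of_real pi \<notin> \<int>"
    using ni by (metis of_real_divide of_real_in_Ints_iff)
  from zcot_pfd[OF this]
  have "(\<lambda>k. complex_of_real (2*x^2/(x^2 - (real k + 1)^2 * pi^2))) sums complex_of_real (x * cot x - 1)"
    by (simp add: cot_of_real)
  thus ?thesis by (simp only: sums_of_real_iff)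
qed

lemma exp_gen_id:
  fixes t :: real
  assumes "t \<noteq> 0"
  shows "(t/2) * (exp (t/2) + inverse (exp (t/2))) / (exp (t/2) - inverse (exp (t/2))) = t/(exp t - 1) + t/2"
proof -
  define E where "E = exp (t/2)"
  have E0: "E > 0" by (simp add: E_def)
  have Et: "exp t = E^2" by (simp add: E_def power2_eq_square exp_add[symmetric])
  have "exp t \<noteq> 1" using assms by simp
  hence E1: "E^2 \<noteq> 1" using Et by simp
  hence E1': "E * E - 1 \<noteq> 0" by (simp add: power2_eq_square)
  have "(E + inverse E) / (E - inverse E) = (E^2 + 1) / (E^2 - 1)"
    using E0 E1' by (simp add: field_simps power2_eq_square)
  moreover have "t/(E^2 - 1) + t/2 = (t/2) * ((E^2+1)/(E^2-1))"
    using E1' by (simp add: field_simps power2_eq_square)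
  ultimately have eq: "(t/2) * ((E + inverse E) / (E - inverse E)) = t/(E^2-1) + t/2" by simp
  thus ?thesis unfolding E_def[symmetric] Et by (simp only: times_divide_eq_right)
qed

lemma gen_pfd:
  fixes t :: real
  assumes t: "t \<noteq> 0"
  shows "(\<lambda>k. 2*t^2/(t^2 + (2*(real k + 1)*pi)^2)) sums (t/(exp t - 1) - 1 + t/2)"
proof -
  define y where "y = t/2"
  define z where "z = \<i> * complex_of_real y"
  have y0: "y \<noteq> 0" using t by (simp add: y_def)
  have "Im (z / complex_of_real pi) = y / pi" by (simp add: z_def)
  hence "z / complex_of_real pi \<notin> \<int>" using y0 by (auto simp: complex_is_Int_iff)
  note s = zcot_pfd[OF this]
  have E: "exp (complex_of_real y) = complex_of_real (exp y)" by (simp add: exp_of_real)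
  have sn: "sin z = \<i> * complex_of_real ((exp y - inverse (exp y)) / 2)"
    unfolding z_def sin_i_times E by simp
  have cs: "cos z = complex_of_real ((exp y + inverse (exp y)) / 2)"
    unfolding z_def cos_i_times E by simp
  define a where "a = (exp y - inverse (exp y)) / 2"
  define b where "b = (exp y + inverse (exp y)) / 2"
  have "z * cot z = (\<i> * (complex_of_real y * complex_of_real b)) / (\<i> * complex_of_real a)"
    unfolding cot_def sn cs a_def[symmetric] b_def[symmetric] by (simp add: z_def)
  also have "\<dots> = (complex_of_real y * complex_of_real b) / complex_of_real a"
    by (rule mult_divide_mult_cancel_left) simp
  also have "\<dots> = complex_of_real (y * b / a)" by simp
  also have "y * b / a = y * (exp y + inverse (exp y)) / (exp y - inverse (exp y))"
    unfolding a_def b_def by (simp add: divide_simps)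
  finally have "z * cot z = complex_of_real (y * (exp y + inverse (exp y)) / (exp y - inverse (exp y)))" .
  also have "y * (exp y + inverse (exp y)) / (exp y - inverse (exp y)) = t/(exp t - 1) + t/2"
    using exp_gen_id[OF t] by (simp add: y_def)
  finally have zc: "z * cot z - 1 = complex_of_real (t/(exp t - 1) - 1 + t/2)" by simp
  have zz: "z^2 = - complex_of_real (y^2)" by (simp add: z_def power_mult_distrib)
  have "(\<lambda>k. 2*z^2/(z^2 - (of_nat k + 1)^2 * (of_real pi)^2))
      = (\<lambda>k. complex_of_real (2*t^2/(t^2 + (2*(real k + 1)*pi)^2)))"
  proof
    fix k
    define Y where "Y = complex_of_real (y^2)"
    define P where "P = (of_nat k + 1)^2 * (complex_of_real pi)^2"
    have "2*z^2/(z^2 - (of_nat k + 1)^2 * (of_real pi)^2) = 2*(-Y)/(-Y - P)"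
      unfolding zz Y_def P_def by simp
    also have "\<dots> = 2*Y/(Y+P)"
    proof -
      have "- Y - P = - (Y + P)" by simp
      thus ?thesis by (simp only: divide_minus_right minus_minus mult_minus_right minus_divide_left[symmetric])
    qed
    also have "\<dots> = complex_of_real (2*y^2/(y^2 + (real k + 1)^2 * pi^2))"
      unfolding Y_def P_def by simp
    finally have "2*z^2/(z^2 - (of_nat k + 1)^2 * (of_real pi)^2) = complex_of_real (2*y^2/(y^2 + (real k + 1)^2 * pi^2))" .
    also have "2*y^2/(y^2 + (real k + 1)^2 * pi^2) = 2*t^2/(t^2 + (2*(real k + 1)*pi)^2)"
    proof -
      have p1: "y^2 + (real k + 1)^2 * pi^2 > 0" by (intro add_nonneg_pos) auto
      have p2: "t^2 + (2*(real k + 1)*pi)^2 > 0" by (intro add_nonneg_pos) auto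
      show ?thesis using p1 p2 by (simp add: y_def field_simps power2_eq_square)
    qed
    finally show "2*z^2/(z^2 - (of_nat k + 1)^2 * (of_real pi)^2) = complex_of_real (2*t^2/(t^2 + (2*(real k + 1)*pi)^2))" .
  qed
  with s zc have "(\<lambda>k. complex_of_real (2*t^2/(t^2 + (2*(real k + 1)*pi)^2))) sums complex_of_real (t/(exp t - 1) - 1 + t/2)"
    by simp
  thus ?thesis by (simp only: sums_of_real_iff)
qed



lemma powser_unique:
  fixes a b :: "nat \<Rightarrow> real"
  assumes r: "r > 0"
    and sa: "\<And>t. t \<noteq> 0 \<Longrightarrow> \<bar>t\<bar> < r \<Longrightarrow> (\<lambda>n. a n * t^n) sums F t"
    and sb: "\<And>t. t \<noteq> 0 \<Longrightarrow> \<bar>t\<bar> < r \<Longrightarrow> (\<lambda>n. b n * t^n) sums F t"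
  shows "a = b"
proof -
  define c where "c n = a n - b n" for n
  have sc: "(\<lambda>n. c n * t^n) sums 0" if "t \<noteq> 0" "\<bar>t\<bar> < r" for t
    using sums_diff[OF sa[OF that] sb[OF that]] by (simp add: c_def algebra_simps)
  have "c m = 0" for m
  proof (induction m rule: less_induct)
    case (less m)
    have s2: "(\<lambda>n. c (n + m) * t^n) sums 0" if t: "t \<noteq> 0" "\<bar>t\<bar> < r" for t
    proof -
      have "(\<lambda>n. c (n + m) * t^(n + m)) sums (0 - (\<Sum>i<m. c i * t^i))"
        using sums_split_initial_segment[OF sc[OF t], of m] by simp
      also have "(\<Sum>i<m. c i * t^i) = 0" using less by simp
      finally have "(\<lambda>n. c (n + m) * t^(n + m) / t^m) sums (0 / t^m)"
        by (intro sums_divide) simp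
      thus ?thesis using t by (simp add: power_add)
    qed
    have "((\<lambda>_. 0::real) \<longlongrightarrow> c (0 + m)) (at (0::real))"
    proof -
      have "((\<lambda>_. 0::real) \<longlongrightarrow> c (0 + m)) (at (0::real))"
        by (rule powser_limit_0_strong[OF r, of "\<lambda>n. c (n + m)" "\<lambda>_. 0"]) (use s2 in auto)
      thus ?thesis by simp
    qed
    moreover have "((\<lambda>_. 0::real) \<longlongrightarrow> 0) (at (0::real))" by simp
    ultimately have "c (0 + m) = 0" by (rule tendsto_unique[OF at_neq_bot])
    thus ?case by simp
  qed
  thus ?thesis unfolding c_def fun_eq_iff by simp
qed

definition Lk :: "nat \<Rightarrow> real" where "Lk k = 2 * (real k + 1) * pi"

definition bc :: "nat \<Rightarrow> real" where
  "bc n = (if n = 0 then 1 else if n = 1 then -1/2 else if even n then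
      (-1)^(n div 2 + 1) * 2 * (\<Sum>k. (1 / (Lk k)^2)^(n div 2)) else 0)"

lemma summable_inv_sq: "summable (\<lambda>k. 1 / (real k + 1)^2)"
  using sums_summable[OF inverse_squares_sums] by (simp add: add.commute)

lemma div_le_self: "0 \<le> a \<Longrightarrow> 1 \<le> d \<Longrightarrow> a / d \<le> (a::real)"
  using divide_left_mono[of 1 d a] by simp

lemma frac_aux: "(D::real) > 0 \<Longrightarrow> 2*a/(a + D) = 2*(a/D)/(1 + a/D)"
  by (simp add: field_simps)

lemma geo_alt:
  fixes q :: real
  assumes "q \<ge> 0"
  shows "(\<Sum>m<n. (-1)^m * 2 * q^(m+1)) = 2*q/(1+q) - 2*q*(-q)^n/(1+q)"
proof (induction n)
  case 0 then show ?case by simp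
next
  case (Suc n)
  have q1: "1 + q \<noteq> 0" using assms by simp
  define X where "X = (-q)^n"
  have XS: "(-q)^Suc n = (-q) * X" by (simp add: X_def)
  have Xm: "X = (-1)^n * q^n" unfolding X_def by (rule power_minus)
  have Xn: "(-1)^n * 2 * q^(n+1) = 2*q*X" unfolding Xm by (simp add: algebra_simps)
  have "2*q*X/(1+q) - 2*q*((-q)*X)/(1+q) = (2*q*X*(1+q))/(1+q)"
    by (simp only: diff_divide_distrib[symmetric]) (simp add: algebra_simps)
  also have "\<dots> = 2*q*X" using q1 by simp
  finally have key: "2*q*X/(1+q) - 2*q*((-q)*X)/(1+q) = 2*q*X" .
  have "(\<Sum>m<Suc n. (-1)^m * 2 * q^(m+1)) = (2*q/(1+q) - 2*q*X/(1+q)) + 2*q*X"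
    using Suc by (simp only: sum.lessThan_Suc Xn X_def)
  also have "\<dots> = 2*q/(1+q) - 2*q*((-q)*X)/(1+q)" using key by simp
  finally show ?case unfolding XS .
qed

lemma Lk_sq: "(Lk k)^2 = (2*pi)^2 * (real k + 1)^2"
  by (simp add: Lk_def power_mult_distrib power2_eq_square algebra_simps)

lemma Lk_pos: "Lk k > 0" by (simp add: Lk_def)

lemma h_sums:
  fixes t :: real
  assumes t: "t \<noteq> 0" "\<bar>t\<bar> < 2*pi"
  shows "(\<lambda>m. (-1)^m * 2 * (\<Sum>k. (t^2/(Lk k)^2)^(m+1))) sums (t/(exp t - 1) - 1 + t/2)"
proof -
  define q where "q k = t^2/(Lk k)^2" for k
  define r where "r = t^2/(2*pi)^2"
  define V where "V = t/(exp t - 1) - 1 + t/2"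
  have qr: "q k = r / (real k + 1)^2" for k by (simp add: q_def r_def Lk_sq)
  have q0: "q k \<ge> 0" for k by (simp add: q_def)
  have r0: "r \<ge> 0" by (simp add: r_def)
  have r1: "r < 1"
  proof -
    have "\<bar>t\<bar>^2 < (2*pi)^2" using t by (intro power_strict_mono) auto
    hence "t^2 < (2*pi)^2" by simp
    thus ?thesis by (simp add: r_def)
  qed
  have qle: "q k \<le> r" for k
  proof -
    have "(1::real) \<le> (real k + 1)^2" by simp
    thus ?thesis unfolding qr using r0 by (intro div_le_self)
  qed
  have sq: "summable q" unfolding qr using summable_mult[OF summable_inv_sq, of r] by simp
  have sV: "(\<lambda>k. 2 * q k / (1 + q k)) sums V"
  proof -
    have "(\<lambda>k. 2*t^2/(t^2 + (2*(real k + 1)*pi)^2)) = (\<lambda>k. 2 * q k / (1 + q k))"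
    proof
      fix k
      have L: "(Lk k)^2 > 0" using Lk_pos[of k] by simp
      have e: "(2*(real k + 1)*pi)^2 = (Lk k)^2" by (simp only: Lk_def)
      show "2*t^2/(t^2 + (2*(real k + 1)*pi)^2) = 2 * q k / (1 + q k)"
        unfolding e q_def using frac_aux[OF L] .
    qed
    thus ?thesis using gen_pfd[OF t(1)] by (simp add: V_def)
  qed
  have sqm: "summable (\<lambda>k. q k^(m+1))" for m
  proof (rule summable_comparison_test'[OF sq])
    fix k :: nat
    have "q k ^ m \<le> 1" using q0[of k] qle[of k] r1 by (intro power_le_one) auto
    hence "q k * q k ^ m \<le> q k * 1" using q0[of k] by (intro mult_left_mono)
    hence "q k^(m+1) \<le> q k * 1" by simp
    thus "norm (q k^(m+1)) \<le> q k" using q0[of k] by simp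
  qed
  define E where "E n = (\<Sum>k. 2*q k*(-q k)^n/(1+q k))" for n
  have sE: "summable (\<lambda>k. 2*q k*(-q k)^n/(1+q k))" for n
  proof (rule summable_comparison_test'[OF summable_mult[OF sq, of 2]])
    fix k :: nat
    have a: "\<bar>(-q k)^n\<bar> \<le> 1" using q0[of k] qle[of k] r1 by (simp add: power_abs power_le_one)
    have "\<bar>2*q k*(-q k)^n/(1+q k)\<bar> = 2*q k*\<bar>(-q k)^n\<bar>/(1+q k)" using q0[of k] by (simp add: abs_mult)
    also have "\<dots> \<le> 2*q k*\<bar>(-q k)^n\<bar>" using q0[of k] by (intro div_le_self) auto
    also have "\<dots> \<le> 2 * q k" using a q0[of k] by (simp add: mult_left_le)
    finally show "norm (2*q k*(-q k)^n/(1+q k)) \<le> 2 * q k" by simp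
  qed
  have ps: "(\<Sum>m<n. (-1)^m * 2 * (\<Sum>k. q k^(m+1))) = V - E n" for n
  proof -
    have "(\<Sum>m<n. (-1)^m * 2 * (\<Sum>k. q k^(m+1))) = (\<Sum>m<n. \<Sum>k. (-1)^m * 2 * q k^(m+1))"
      by (intro sum.cong refl, subst suminf_mult[OF sqm, symmetric]) (simp only: mult.assoc)
    also have "\<dots> = (\<Sum>k. \<Sum>m<n. (-1)^m * 2 * q k^(m+1))"
      by (rule suminf_sum[symmetric], rule summable_mult[OF sqm])
    also have "\<dots> = (\<Sum>k. 2*q k/(1+q k) - 2*q k*(-q k)^n/(1+q k))"
      by (rule arg_cong[where f = suminf], rule ext, rule geo_alt[OF q0])
    also have "\<dots> = V - E n"
      unfolding E_def using suminf_diff[OF sums_summable[OF sV] sE[of n]] sums_unique[OF sV] by simp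
    finally show ?thesis .
  qed
  have E0: "E \<longlonglongrightarrow> 0"
  proof (rule Lim_null_comparison)
    show "\<forall>\<^sub>F n in sequentially. norm (E n) \<le> 2 * (\<Sum>k. q k) * r^n"
    proof (intro always_eventually allI)
      fix n
      have "norm (E n) \<le> (\<Sum>k. 2 * q k * r^n)"
        unfolding E_def
      proof (rule norm_suminf_le)
        fix k
        have a: "\<bar>(-q k)^n\<bar> \<le> r^n" using q0[of k] qle[of k] by (simp add: power_abs power_mono)
        have "\<bar>2*q k*(-q k)^n/(1+q k)\<bar> = 2*q k*\<bar>(-q k)^n\<bar>/(1+q k)" using q0[of k] by (simp add: abs_mult)
        also have "\<dots> \<le> 2*q k*\<bar>(-q k)^n\<bar>" using q0[of k]
          by (intro div_le_self) auto
        also have "\<dots> \<le> 2 * q k * r^n" using a q0[of k] by (simp add: mult_left_mono)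
        finally show "norm (2*q k*(-q k)^n/(1+q k)) \<le> 2 * q k * r^n" by simp
      next
        show "summable (\<lambda>k. 2 * q k * r^n)" using summable_mult2[OF summable_mult[OF sq, of 2]] by simp
      qed
      also have "(\<Sum>k. 2 * q k * r^n) = 2 * (\<Sum>k. q k) * r^n"
        using suminf_mult2[OF summable_mult[OF sq, of 2]] suminf_mult[OF sq, of 2] by simp
      finally show "norm (E n) \<le> 2 * (\<Sum>k. q k) * r^n" .
    qed
    show "(\<lambda>n. 2 * (\<Sum>k. q k) * r^n) \<longlonglongrightarrow> 0"
      using LIMSEQ_power_zero[of r] r0 r1 by (intro tendsto_mult_right_zero) simp
  qed
  have "(\<lambda>n. V - E n) \<longlonglongrightarrow> V - 0" by (intro tendsto_intros E0)
  hence "(\<lambda>n. \<Sum>m<n. (-1)^m * 2 * (\<Sum>k. q k^(m+1))) \<longlonglongrightarrow> V" by (simp only: ps diff_zero)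
  thus ?thesis unfolding sums_def q_def V_def .
qed

lemma summable_Lk:
  assumes "j \<ge> 1"
  shows "summable (\<lambda>k. (1/(Lk k)^2)^j)"
proof (rule summable_comparison_test'[OF summable_mult[OF summable_inv_sq, of "1/(2*pi)^2"]])
  fix k :: nat
  have L1: "Lk k \<ge> 1"
  proof -
    have "Lk k \<ge> 2 * 1 * pi" unfolding Lk_def by (intro mult_right_mono) auto
    thus ?thesis using pi_gt3 by linarith
  qed
  have a0: "0 \<le> 1/(Lk k)^2" by simp
  have a1: "1/(Lk k)^2 \<le> 1" using L1 by (simp add: divide_le_eq_1)
  have "(1/(Lk k)^2)^j \<le> 1/(Lk k)^2" using power_decreasing[OF assms a0 a1] by (simp only: power_one_right)
  also have "\<dots> = 1/(2*pi)^2 * (1 / (real k + 1)^2)" by (simp add: Lk_sq)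
  finally show "norm ((1/(Lk k)^2)^j) \<le> 1/(2*pi)^2 * (1 / (real k + 1)^2)" using a0 by simp
qed

lemma bc_sums:
  fixes t :: real
  assumes t: "t \<noteq> 0" "\<bar>t\<bar> < 2*pi"
  shows "(\<lambda>n. bc n * t^n) sums (t/(exp t - 1))"
proof -
  define g where "g n = (if n \<le> 1 then n else 2*n - 2)" for n :: nat
  have sm: "strict_mono g"
  proof (rule strict_monoI_Suc)
    fix n show "g n < g (Suc n)" by (simp add: g_def)
  qed
  have zero: "bc n * t^n = 0" if "n \<notin> range g" for n
  proof -
    have "n \<noteq> 0" "n \<noteq> 1" using that by (auto simp: g_def image_iff intro: exI[of _ 0] exI[of _ 1])
    moreover have "odd n"
    proof
      assume e: "even n"
      with \<open>n \<noteq> 0\<close> have "n \<ge> 2" by presburger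
      hence "g (n div 2 + 1) = n" using e by (auto simp: g_def)
      thus False using that by (metis rangeI)
    qed
    ultimately show ?thesis by (simp add: bc_def)
  qed
  have hs: "(\<lambda>m. (-1)^m * 2 * (\<Sum>k. (t^2/(Lk k)^2)^(m+1))) sums (t/(exp t - 1) - 1 + t/2)"
    by (rule h_sums[OF t])
  have eq: "bc (g (Suc (Suc m))) * t^(g (Suc (Suc m))) = (-1)^m * 2 * (\<Sum>k. (t^2/(Lk k)^2)^(m+1))" for m
  proof -
    have g2: "g (Suc (Suc m)) = 2 * (m+1)" by (simp add: g_def)
    have "(\<Sum>k. (t^2/(Lk k)^2)^(m+1)) = (\<Sum>k. (t^2)^(m+1) * (1/(Lk k)^2)^(m+1))"
      by (simp add: power_divide)
    also have "\<dots> = (t^2)^(m+1) * (\<Sum>k. (1/(Lk k)^2)^(m+1))"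
      by (rule suminf_mult[OF summable_Lk]) simp
    also have "(t^2)^(m+1) = t^(2*(m+1))" by (simp only: power_mult)
    finally have "(\<Sum>k. (t^2/(Lk k)^2)^(m+1)) = t^(2*(m+1)) * (\<Sum>k. (1/(Lk k)^2)^(m+1))" .
    moreover have "bc (2*(m+1)) = (-1)^m * 2 * (\<Sum>k. (1/(Lk k)^2)^(m+1))"
      by (simp add: bc_def)
    ultimately show ?thesis unfolding g2 by simp
  qed
  have "(\<lambda>m. bc (g (Suc (Suc m))) * t^(g (Suc (Suc m)))) sums (t/(exp t - 1) - 1 + t/2)"
    using hs by (simp only: eq)
  hence "(\<lambda>m. bc (g (Suc m)) * t^(g (Suc m))) sums (t/(exp t - 1) - 1 + t/2 + bc (g 1) * t^(g 1))"
    using sums_Suc_iff[of "\<lambda>m. bc (g (Suc m)) * t^(g (Suc m))"] by simp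
  hence S: "(\<lambda>m. bc (g m) * t^(g m)) sums (t/(exp t - 1) - 1 + t/2 + bc (g 1) * t^(g 1) + bc (g 0) * t^(g 0))"
    using sums_Suc_iff[of "\<lambda>m. bc (g m) * t^(g m)"] by simp
  have E: "t/(exp t - 1) - 1 + t/2 + bc (g 1) * t^(g 1) + bc (g 0) * t^(g 0) = t/(exp t - 1)"
    by (simp add: g_def bc_def)
  have "(\<lambda>m. bc (g m) * t^(g m)) sums (t/(exp t - 1))" using S unfolding E .
  thus ?thesis using sums_mono_reindex[OF sm, of "\<lambda>n. bc n * t^n"] zero by simp
qed

lemma bernoulli_eq: "bernoulli = (\<lambda>n. fact n * bc n)"
  unfolding bernoulli_def
proof (rule the_equality)
  show "\<forall>t::real. t \<noteq> 0 \<and> \<bar>t\<bar> < 2 * pi \<longrightarrow>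
      (\<lambda>n. fact n * bc n * t ^ n / fact n) sums (t / (exp t - 1))"
    using bc_sums by simp
next
  fix B :: "nat \<Rightarrow> real"
  assume B: "\<forall>t::real. t \<noteq> 0 \<and> \<bar>t\<bar> < 2 * pi \<longrightarrow>
      (\<lambda>n. B n * t ^ n / fact n) sums (t / (exp t - 1))"
  have "(\<lambda>n. B n / fact n) = bc"
  proof (rule powser_unique[of "2*pi"])
    show "0 < 2*pi" by simp
    fix t :: real assume t: "t \<noteq> 0" "\<bar>t\<bar> < 2*pi"
    show "(\<lambda>n. bc n * t^n) sums (t/(exp t - 1))" by (rule bc_sums[OF t])
    have "(\<lambda>n. B n * t ^ n / fact n) sums (t / (exp t - 1))" using B t by blast
    thus "(\<lambda>n. B n / fact n * t^n) sums (t/(exp t - 1))" by (simp add: field_simps)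
  qed
  thus "B = (\<lambda>n. fact n * bc n)" by (auto simp: fun_eq_iff field_simps)
qed

lemma abs_bern:
  assumes "m \<ge> 1"
  shows "\<bar>bernoulli (2*m)\<bar> = fact (2*m) * 2 * (\<Sum>k. (1/(Lk k)^2)^m)"
proof -
  have "(\<Sum>k. (1/(Lk k)^2)^m) \<ge> 0" by (intro suminf_nonneg summable_Lk assms) simp
  thus ?thesis using assms by (simp add: bernoulli_eq bc_def abs_mult)
qed



definition ee :: "nat \<Rightarrow> real \<Rightarrow> real" where "ee i y = 2*y^i - 8*(y/4)^i"
definition tau :: "nat \<Rightarrow> real \<Rightarrow> real" where
  "tau N y = 2*y^(N+1)/(1-y) - 8*(y/4)^(N+1)/(1-y/4)"
definition Phi :: "real \<Rightarrow> real" where "Phi y = 2*y/(1-y) - 8*(y/4)/(1-y/4)"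

lemma geo_tail:
  fixes s :: real
  assumes "s \<noteq> 1"
  shows "s/(1-s) = (\<Sum>j=1..N. s^j) + s^(N+1)/(1-s)"
proof (induction N)
  case 0 then show ?case by simp
next
  case (Suc N)
  have a: "1 - s \<noteq> 0" using assms by simp
  have "s^(N+1)/(1-s) = s^(N+1) + s^(Suc N+1)/(1-s)"
  proof -
    have "s^(N+1) = s^(N+1) * (1-s) / (1-s)" using a by simp
    also have "\<dots> = (s^(N+1) - s^(Suc N+1)) / (1-s)" by (simp add: algebra_simps)
    finally have "s^(N+1) + s^(Suc N+1)/(1-s) = (s^(N+1) - s^(Suc N+1)) / (1-s) + s^(Suc N+1)/(1-s)"
      by simp
    also have "\<dots> = s^(N+1)/(1-s)" by (simp add: add_divide_distrib[symmetric])
    finally show ?thesis by simp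
  qed
  thus ?case using Suc by (simp add: sum.cl_ivl_Suc)
qed

lemma Phi_split:
  fixes s :: real
  assumes "s \<noteq> 1" "s \<noteq> 4"
  shows "Phi s = (\<Sum>j=1..N. ee j s) + tau N s"
proof -
  have s4: "s/4 \<noteq> 1" using assms by simp
  have "Phi s = 2 * (s/(1-s)) - 8 * ((s/4)/(1-s/4))" unfolding Phi_def by (simp only: times_divide_eq_right)
  also have "\<dots> = 2 * ((\<Sum>j=1..N. s^j) + s^(N+1)/(1-s)) - 8 * ((\<Sum>j=1..N. (s/4)^j) + (s/4)^(N+1)/(1-s/4))"
    using geo_tail[OF assms(1), of N] geo_tail[OF s4, of N] by simp
  also have "\<dots> = (\<Sum>j=1..N. ee j s) + tau N s"
  proof -
    have e1: "(\<Sum>j=1..N. ee j s) = 2*(\<Sum>j=1..N. s^j) - 8*(\<Sum>j=1..N. (s/4)^j)"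
      by (simp add: ee_def sum_subtractf sum_distrib_left)
    have e2: "tau N s = 2 * (s^(N+1)/(1-s)) - 8*((s/4)^(N+1)/(1-s/4))"
      by (simp only: tau_def times_divide_eq_right)
    have g: "\<And>A B C D::real. 2*(A+B) - 8*(C+D) = (2*A - 8*C) + (2*B - 8*D)" by (simp add: algebra_simps)
    show ?thesis unfolding e1 e2 by (rule g)
  qed
  finally show ?thesis .
qed

lemma pw:
  fixes s :: real
  assumes "s \<ge> 0" "m \<ge> 2"
  shows "8*(s/4)^m \<le> s^m/2"
proof -
  have "(4::real)^m \<ge> 4^2" using assms(2) by (intro power_increasing) auto
  hence h: "(4::real)^m \<ge> 16" by simp
  have "8*(s/4)^m = 8 * s^m / 4^m" by (simp add: power_divide)
  also have "\<dots> \<le> 8 * s^m / 16" using h assms(1) by (intro divide_left_mono) auto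
  finally show ?thesis by simp
qed

lemma cmp:
  fixes s :: real
  assumes "0 \<le> s" "s \<le> 1/4" "m \<ge> 2"
  shows "8*(s/4)^m/(1-s/4) \<le> 2* s^m/(1-s)"
    and "0 < s \<Longrightarrow> 8*(s/4)^m/(1-s/4) < 2* s^m/(1-s)"
proof -
  have a: "0 < 1 - s" "1 - s \<le> 1 - s/4" using assms by auto
  have X0: "0 \<le> 8*(s/4)^m" using assms by simp
  have "8*(s/4)^m/(1-s/4) \<le> 8*(s/4)^m/(1-s)" using a X0 by (intro divide_left_mono) auto
  also have "\<dots> \<le> (s^m/2)/(1-s)" using pw[OF assms(1,3)] a by (intro divide_right_mono) auto
  finally have b: "8*(s/4)^m/(1-s/4) \<le> (s^m/2)/(1-s)" .
  also have "\<dots> \<le> 2* s^m/(1-s)" using a assms by (intro divide_right_mono) auto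
  finally show "8*(s/4)^m/(1-s/4) \<le> 2* s^m/(1-s)" .
  assume s: "0 < s"
  have "(s^m/2)/(1-s) < 2* s^m/(1-s)" using a s by (intro divide_strict_right_mono) auto
  with b show "8*(s/4)^m/(1-s/4) < 2* s^m/(1-s)" by linarith
qed

lemma tau_pos:
  assumes "N \<ge> 1" "0 < s" "s \<le> 1/4"
  shows "tau N s > 0"
  using cmp(2)[of s "N+1"] assms by (simp add: tau_def)

lemma tau_diff:
  fixes s :: real
  assumes "s \<noteq> 1" "s \<noteq> 4"
  shows "tau N s - ee (N+1) s = 2* s^(N+2)/(1-s) - 8*(s/4)^(N+2)/(1-s/4)"
proof -
  have a: "1 - s \<noteq> 0" "1 - s/4 \<noteq> 0" using assms by auto
  have e1: "2* s^(N+1)/(1-s) - 2* s^(N+1) = 2* s^(N+2)/(1-s)"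
  proof -
    have "2* s^(N+1) = 2* s^(N+1)*(1-s)/(1-s)" using a by simp
    hence "2* s^(N+1)/(1-s) - 2* s^(N+1) = (2* s^(N+1) - 2* s^(N+1)*(1-s))/(1-s)"
      by (simp add: diff_divide_distrib)
    also have "2* s^(N+1) - 2* s^(N+1)*(1-s) = 2* s^(N+2)" by (simp add: algebra_simps)
    finally show ?thesis .
  qed
  have e2: "8*(s/4)^(N+1)/(1-s/4) - 8*(s/4)^(N+1) = 8*(s/4)^(N+2)/(1-s/4)"
  proof -
    have "8*(s/4)^(N+1) = 8*(s/4)^(N+1)*(1-s/4)/(1-s/4)" using a by simp
    hence "8*(s/4)^(N+1)/(1-s/4) - 8*(s/4)^(N+1) = (8*(s/4)^(N+1) - 8*(s/4)^(N+1)*(1-s/4))/(1-s/4)"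
      by (simp add: diff_divide_distrib)
    also have "8*(s/4)^(N+1) - 8*(s/4)^(N+1)*(1-s/4) = 8*(s/4)^(N+2)" by (simp add: algebra_simps)
    finally show ?thesis .
  qed
  show ?thesis unfolding tau_def ee_def using e1 e2 by simp
qed

lemma tau_lower:
  assumes "0 \<le> s" "s \<le> 1/4"
  shows "ee (N+1) s \<le> tau N s"
proof -
  have "0 \<le> 2* s^(N+2)/(1-s) - 8*(s/4)^(N+2)/(1-s/4)" using cmp(1)[OF assms, of "N+2"] by simp
  moreover have "tau N s - ee (N+1) s = 2 * s^(N+2)/(1-s) - 8*(s/4)^(N+2)/(1-s/4)"
    by (rule tau_diff) (use assms in auto)
  ultimately show ?thesis by linarith
qed

lemma tau_upper:
  assumes "0 \<le> s" "s \<le> 1/4"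
  shows "tau N s \<le> ee (N+1) s + 8/3 * s^(N+2)"
proof -
  have a: "3/4 \<le> 1 - s" using assms by simp
  have "2* s^(N+2)/(1-s) - 8*(s/4)^(N+2)/(1-s/4) \<le> 2* s^(N+2)/(1-s)"
    using assms by (simp add: zero_le_divide_iff)
  also have "\<dots> \<le> 2* s^(N+2)/(3/4)" using a assms by (intro divide_left_mono) auto
  also have "\<dots> = 8/3 * s^(N+2)" by simp
  finally have F: "2 * s^(N+2)/(1-s) - 8*(s/4)^(N+2)/(1-s/4) \<le> 8/3 * s^(N+2)" .
  have "tau N s - ee (N+1) s = 2 * s^(N+2)/(1-s) - 8*(s/4)^(N+2)/(1-s/4)"
    by (rule tau_diff) (use assms in auto)
  with F show ?thesis by linarith
qed

lemma ee_lower: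
  assumes "N \<ge> 1" "0 \<le> s"
  shows "3/2 * s^(N+1) \<le> ee (N+1) s"
  using pw[OF assms(2), of "N+1"] assms by (simp add: ee_def)

lemma tan_ge_x:
  assumes "0 \<le> x" "x < pi/2"
  shows "x \<le> tan x"
proof -
  have "tan 0 - 0 \<le> tan x - x"
  proof (rule DERIV_nonneg_imp_nondecreasing[OF assms(1)])
    fix t assume t: "0 \<le> t" "t \<le> x"
    have c: "0 < cos t" using t assms by (intro cos_gt_zero_pi) auto
    have c1: "(cos t)^2 \<le> 1" by (simp add: cos_squared_eq)
    have "1 \<le> inverse ((cos t)^2)" using c c1 by (simp add: one_le_inverse)
    moreover have "DERIV (\<lambda>t. tan t - t) t :> inverse ((cos t)^2) - 1"
      using c by (auto intro!: derivative_eq_intros)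
    ultimately show "\<exists>y. DERIV (\<lambda>t. tan t - t) t :> y \<and> 0 \<le> y" by auto
  qed
  thus ?thesis by simp
qed

lemma tan_ge_cubic:
  assumes "0 \<le> x" "x < pi/2"
  shows "x + x^3/3 \<le> tan x"
proof -
  have "tan 0 - 0 - 0^3/3 \<le> tan x - x - x^3/3"
  proof (rule DERIV_nonneg_imp_nondecreasing[OF assms(1)])
    fix t assume t: "0 \<le> t" "t \<le> x"
    have c: "0 < cos t" using t assms by (intro cos_gt_zero_pi) auto
    have id: "inverse ((cos t)^2) - 1 = (tan t)^2"
    proof -
      have "inverse ((cos t)^2) = ((sin t)^2 + (cos t)^2) / (cos t)^2" by (simp add: divide_inverse)
      also have "\<dots> = (tan t)^2 + 1"
      proof -
        have c2: "(cos t)^2 \<noteq> 0" using c by simp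
        thus ?thesis by (simp add: tan_def power_divide field_simps)
      qed
      finally show ?thesis by simp
    qed
    have tt: "t \<le> tan t" using t assms by (intro tan_ge_x) auto
    have "t^2 \<le> (tan t)^2" using tt t by (intro power_mono) auto
    hence nn: "0 \<le> inverse ((cos t)^2) - 1 - 3 * t^2 / 3" using id by simp
    have "DERIV (\<lambda>t. tan t - t - t^3/3) t :> inverse ((cos t)^2) - 1 - 3 * t^2 / 3"
      using c by (auto intro!: derivative_eq_intros)
    thus "\<exists>y. DERIV (\<lambda>t. tan t - t - t^3/3) t :> y \<and> 0 \<le> y" using nn by auto
  qed
  thus ?thesis by simp
qed

lemma tan_over_x_lim: "((\<lambda>x. tan x / x) \<longlongrightarrow> 1) (at_right (0::real))"
proof -
  have "DERIV tan 0 :> 1" using DERIV_tan[of 0] by simp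
  hence "((\<lambda>y. (tan y - tan 0) / (y - 0)) \<longlongrightarrow> 1) (at (0::real))"
    by (simp add: has_field_derivative_iff)
  hence "((\<lambda>y. tan y / y) \<longlongrightarrow> 1) (at (0::real))" by simp
  thus ?thesis by (rule tendsto_mono[rotated]) (simp add: at_le)
qed



definition sg :: "real \<Rightarrow> nat \<Rightarrow> real" where "sg x k = 4 * x^2 / (Lk k)^2"

lemma Lk_ge: "Lk k \<ge> 2*pi"
  unfolding Lk_def by (intro mult_right_mono) auto

lemma sg_bounds:
  assumes "0 < x" "x < pi/2"
  shows "0 < sg x k" "sg x k \<le> x^2/pi^2" "x^2/pi^2 < 1/4"
proof -
  show "0 < sg x k" using assms Lk_pos[of k] by (simp add: sg_def)
  have "(2*pi)^2 \<le> (Lk k)^2" using Lk_ge[of k] by (intro power_mono) auto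
  moreover have "(Lk k)^2 > 0" using Lk_pos[of k] by simp
  ultimately have "4 * x^2 / (Lk k)^2 \<le> 4 * x^2 / (2*pi)^2"
    using assms by (intro divide_left_mono) auto
  thus "sg x k \<le> x^2/pi^2" by (simp add: sg_def power_mult_distrib)
  have "x^2 < (pi/2)^2" using assms by (intro power_strict_mono) auto
  thus "x^2/pi^2 < 1/4" by (simp add: power_divide field_simps)
qed

lemma frac_neg:
  fixes u P :: real
  assumes "P > 0" "u \<noteq> P"
  shows "2*u/(u-P) = -(2*(u/P)/(1-u/P))"
proof -
  have "1 - u/P = (P - u)/P" using assms by (simp add: field_simps)
  hence "2*(u/P)/(1-u/P) = 2*u/(P-u)" using assms by (simp add: field_simps)
  also have "\<dots> = -(2*u/(u-P))" by (simp only: minus_divide_right minus_diff_eq)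
  finally show ?thesis by simp
qed

lemma sg_alt: "sg x k = x^2 / ((real k + 1)^2 * pi^2)"
  by (simp add: sg_def Lk_sq power_mult_distrib)

lemma cot_sums_sg:
  assumes "0 < x" "x < pi"
  shows "(\<lambda>k. -(2 * sg x k / (1 - sg x k))) sums (x * cot x - 1)"
proof -
  have "(\<lambda>k. 2*x^2/(x^2 - (real k + 1)^2 * pi^2)) = (\<lambda>k. -(2 * sg x k / (1 - sg x k)))"
  proof
    fix k
    have P: "(real k + 1)^2 * pi^2 > 0" by simp
    have ne: "x^2 \<noteq> (real k + 1)^2 * pi^2"
    proof
      assume h: "x^2 = (real k + 1)^2 * pi^2"
      have "x^2 < pi^2" using assms by (intro power_strict_mono) auto
      moreover have "pi^2 \<le> (real k + 1)^2 * pi^2" by simp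
      ultimately show False using h by linarith
    qed
    show "2*x^2/(x^2 - (real k + 1)^2 * pi^2) = -(2 * sg x k / (1 - sg x k))"
      unfolding sg_alt by (rule frac_neg[OF P ne])
  qed
  thus ?thesis using real_cot_pfd[OF assms] by simp
qed

lemma half_sg: "sg (x/2) k = sg x k / 4"
  by (simp add: sg_def power_divide)

lemma trig_id:
  assumes "0 < x" "x < pi"
  shows "mid_expr x = 4 * ((x/2) * cot (x/2)) - x * cot x"
proof -
  define a where "a = sin (x/2)"
  define b where "b = cos (x/2)"
  have a0: "a > 0" unfolding a_def using assms by (intro sin_gt_zero) auto
  have b0: "b > 0" unfolding b_def using assms by (intro cos_gt_zero_pi) auto
  have ab: "a^2 + b^2 = 1" by (simp add: a_def b_def)
  have sx: "sin x = 2*a*b" unfolding a_def b_def using sin_double[of "x/2"] by simp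
  have cx: "cos x = b^2 - a^2" unfolding a_def b_def using cos_double[of "x/2"] by simp
  have s0: "sin x \<noteq> 0" using sx a0 b0 by simp
  have "x / sin x = 2 * ((x/2) * cot (x/2)) - x * cot x"
  proof -
    have "cot (x/2) - cot x = 1 / sin x"
    proof -
      have "cot (x/2) - cot x = b/a - (b^2 - a^2)/(2*a*b)"
        by (simp add: cot_def sx cx a_def[symmetric] b_def[symmetric])
      also have "\<dots> = (a^2 + b^2)/(2*a*b)" using a0 b0 by (simp add: field_simps power2_eq_square)
      also have "\<dots> = 1 / sin x" by (simp add: ab sx)
      finally show ?thesis .
    qed
    hence "x * (cot (x/2) - cot x) = x / sin x" by simp
    thus ?thesis by (simp add: algebra_simps)
  qed
  moreover have "x / tan x = x * cot x" by (simp add: tan_def cot_def)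
  ultimately show ?thesis unfolding mid_expr_def by simp
qed

lemma Phi_sums:
  assumes "0 < x" "x < pi/2"
  shows "(\<lambda>k. Phi (sg x k)) sums (mid_expr x - 3)"
proof -
  have pi2: "pi/2 < pi" by simp
  have s1: "(\<lambda>k. -(2 * sg x k / (1 - sg x k))) sums (x * cot x - 1)"
    using cot_sums_sg[of x] assms by simp
  have s2: "(\<lambda>k. -(2 * (sg x k / 4) / (1 - sg x k / 4))) sums ((x/2) * cot (x/2) - 1)"
    using cot_sums_sg[of "x/2"] assms by (simp add: half_sg)
  have "(\<lambda>k. 4 * (-(2 * (sg x k / 4) / (1 - sg x k / 4))) - (-(2 * sg x k / (1 - sg x k))))
      sums (4 * ((x/2) * cot (x/2) - 1) - (x * cot x - 1))"
    by (intro sums_diff sums_mult s1 s2)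
  moreover have "(\<lambda>k. 4 * (-(2 * (sg x k / 4) / (1 - sg x k / 4))) - (-(2 * sg x k / (1 - sg x k))))
      = (\<lambda>k. Phi (sg x k))"
  proof
    fix k
    have g: "\<And>a b c::real. 4*(-(2*a/b)) - (-c) = c - 8*a/b" by (simp add: field_simps)
    show "4 * (-(2 * (sg x k / 4) / (1 - sg x k / 4))) - (-(2 * sg x k / (1 - sg x k))) = Phi (sg x k)"
      unfolding Phi_def by (rule g)
  qed
  moreover have "4 * ((x/2) * cot (x/2) - 1) - (x * cot x - 1) = mid_expr x - 3"
    using trig_id[of x] assms by simp
  ultimately show ?thesis by simp
qed

lemma coef_sums:
  assumes "j \<ge> 1"
  shows "(\<lambda>k. ee j (sg x k)) sums ((2^(2*j) - 4) * \<bar>bernoulli (2*j)\<bar> / fact (2*j) * x^(2*j))"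
proof -
  define W where "W = (\<Sum>k. (1/(Lk k)^2)^j)"
  have sW: "(\<lambda>k. (1/(Lk k)^2)^j) sums W" unfolding W_def using summable_Lk[OF assms] by (rule summable_sums)
  have e: "ee j (sg x k) = ((2*4^j - 8) * (x^2)^j) * (1/(Lk k)^2)^j" for k
  proof -
    have "Lk k > 0" by (rule Lk_pos)
    thus ?thesis unfolding ee_def sg_def by (simp add: power_divide power_mult_distrib field_simps)
  qed
  have "(\<lambda>k. ((2*4^j - 8) * (x^2)^j) * (1/(Lk k)^2)^j) sums (((2*4^j - 8) * (x^2)^j) * W)"
    by (rule sums_mult[OF sW])
  moreover have "((2*4^j - 8) * (x^2)^j) * W = (2^(2*j) - 4) * \<bar>bernoulli (2*j)\<bar> / fact (2*j) * x^(2*j)"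
  proof -
    have "\<bar>bernoulli (2*j)\<bar> = fact (2*j) * 2 * W" unfolding W_def by (rule abs_bern[OF assms])
    moreover have "(2::real)^(2*j) = 4^j" by (simp add: power_mult)
    moreover have "(x^2)^j = x^(2*j)" by (simp add: power_mult)
    ultimately show ?thesis by (simp add: field_simps)
  qed
  ultimately show ?thesis using e by simp
qed

lemma ee1: "ee 1 y = 0" by (simp add: ee_def)

lemma main_sums:
  assumes "0 < x" "x < pi/2"
  shows "(\<lambda>k. tau N (sg x k)) sums (mid_expr x - poly_part N x)"
proof -
  define c where "c j = (2^(2*j) - 4) * \<bar>bernoulli (2*j)\<bar> / fact (2*j) * x^(2*j)" for j :: nat
  have cs: "(\<lambda>k. ee j (sg x k)) sums c j" if "j \<in> {1..N}" for j
    using coef_sums[of j x] that by (simp add: c_def)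
  have S: "(\<lambda>k. \<Sum>j=1..N. ee j (sg x k)) sums (\<Sum>j=1..N. c j)"
    by (rule sums_sum) (rule cs)
  have c1: "c 1 = 0"
  proof -
    have "(\<lambda>k. 0::real) sums c 1" using coef_sums[of 1 x] by (simp add: c_def ee1)
    from sums_unique2[OF this sums_zero] show ?thesis by simp
  qed
  have "poly_part N x = 3 + (\<Sum>j=1..N. c j)"
  proof (cases "N \<ge> 1")
    case True
    have "(\<Sum>j=1..N. c j) = c 1 + (\<Sum>j=2..N. c j)"
      using True by (simp add: sum.atLeast_Suc_atMost numeral_2_eq_2)
    thus ?thesis by (simp add: poly_part_def c_def c1 mult.assoc)
  next
    case False thus ?thesis by (simp add: poly_part_def)
  qed
  moreover have "(\<lambda>k. Phi (sg x k) - (\<Sum>j=1..N. ee j (sg x k))) sums (mid_expr x - 3 - (\<Sum>j=1..N. c j))"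
    by (rule sums_diff[OF Phi_sums[OF assms] S])
  moreover have "Phi (sg x k) - (\<Sum>j=1..N. ee j (sg x k)) = tau N (sg x k)" for k
  proof -
    have "sg x k < 1/4" using sg_bounds(2)[OF assms, of k] sg_bounds(3)[OF assms] by linarith
    hence "sg x k \<noteq> 1" "sg x k \<noteq> 4" by auto
    hence "Phi (sg x k) = (\<Sum>j=1..N. ee j (sg x k)) + tau N (sg x k)" by (rule Phi_split)
    thus ?thesis by simp
  qed
  ultimately show ?thesis by (simp add: diff_diff_eq)
qed



lemma sg_pow_sums:
  assumes "m \<ge> 1"
  shows "(\<lambda>k. sg x k ^ m) sums (\<Sum>k. sg x k ^ m)"
proof -
  have "(\<lambda>k. (4*x^2)^m * (1/(Lk k)^2)^m) = (\<lambda>k. sg x k ^ m)"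
    by (rule ext) (simp add: sg_def power_divide power_mult_distrib)
  moreover have "summable (\<lambda>k. (4*x^2)^m * (1/(Lk k)^2)^m)"
    by (rule summable_mult[OF summable_Lk[OF assms]])
  ultimately show ?thesis by (metis summable_sums)
qed

lemma sg_le:
  assumes "0 < x" "x < pi/2"
  shows "0 < sg x k" "sg x k \<le> 1/4"
  using sg_bounds(1)[OF assms, of k] sg_bounds(2)[OF assms, of k] sg_bounds(3)[OF assms] by linarith+

lemma vr_sums:
  assumes "0 < x" "x < pi/2"
  shows "(\<lambda>k. ee (N+1) (sg x k)) sums (4 * (2^(2*N) - 1) * \<bar>bernoulli (2*N+2)\<bar> / fact (2*N+2) * x^(2*N+2))"
proof -
  have "(\<lambda>k. ee (N+1) (sg x k)) sums ((2^(2*(N+1)) - 4) * \<bar>bernoulli (2*(N+1))\<bar> / fact (2*(N+1)) * x^(2*(N+1)))"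
    by (rule coef_sums) simp
  moreover have "(2::real)^(2*(N+1)) - 4 = 4 * (2^(2*N) - 1)" by (simp add: power_add algebra_simps)
  moreover have "2*(N+1) = 2*N+2" by simp
  ultimately show ?thesis by simp
qed

lemma poly_ge3: "poly_part N x \<ge> 3"
proof -
  have "0 \<le> (\<Sum>j=2..N. (2^(2*j) - 4) * \<bar>bernoulli (2*j)\<bar> / fact (2*j) * x ^ (2*j))"
  proof (rule sum_nonneg)
    fix j assume j: "j \<in> {2..N}"
    have "(2::real)^(2*j) \<ge> 2^4" using j by (intro power_increasing) auto
    hence a: "(2::real)^(2*j) - 4 \<ge> 0" by simp
    have b: "x^(2*j) \<ge> 0" by (simp add: power_mult)
    show "0 \<le> (2^(2*j) - 4) * \<bar>bernoulli (2*j)\<bar> / fact (2*j) * x ^ (2*j)"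
      using a b by simp
  qed
  thus ?thesis by (simp add: poly_part_def)
qed

theorem theorem10:
  fixes N :: nat
  assumes "N \<ge> 1"
  defines "vr \<equiv> 4 * (2^(2*N) - 1) * \<bar>bernoulli (2*N+2)\<bar> / fact (2*N+2)"
  shows "(\<forall>x::real. 0 < x \<and> x < pi/2 \<longrightarrow>
            poly_part N x + 0 * x^(2*N+1) * tan x < mid_expr x \<and>
            mid_expr x < poly_part N x + vr * x^(2*N+1) * tan x)
       \<and> (\<forall>c::real. (\<forall>x::real. 0 < x \<and> x < pi/2 \<longrightarrow>
               poly_part N x + c * x^(2*N+1) * tan x < mid_expr x) \<longrightarrow> c \<le> 0)
       \<and> (\<forall>c::real. (\<forall>x::real. 0 < x \<and> x < pi/2 \<longrightarrow>
               mid_expr x < poly_part N x + c * x^(2*N+1) * tan x) \<longrightarrow> vr \<le> c)"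
proof -
  have N1: "N \<ge> 1" by fact
  have vr0: "vr \<ge> 0"
  proof -
    have "(2::real)^(2*N) \<ge> 1" by simp
    thus ?thesis unfolding vr_def by simp
  qed
  have VS: "(\<lambda>k. ee (N+1) (sg x k)) sums (vr * x^(2*N+2))" if "0 < x" "x < pi/2" for x
    using vr_sums[OF that, of N] by (simp add: vr_def)
  have lowT: "vr * x^(2*N+2) \<le> mid_expr x - poly_part N x" if x: "0 < x" "x < pi/2" for x
  proof (rule sums_le[OF _ VS[OF x] main_sums[OF x]])
    fix k show "ee (N+1) (sg x k) \<le> tau N (sg x k)"
      using sg_le[OF x, of k] by (intro tau_lower) auto
  qed
  have P1: "poly_part N x + 0 * x^(2*N+1) * tan x < mid_expr x \<and>
            mid_expr x < poly_part N x + vr * x^(2*N+1) * tan x" if x: "0 < x" "x < pi/2" for x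
  proof
    have sb: "0 < sg x k" "sg x k \<le> 1/4" for k using sg_le[OF x, of k] by auto
    have "0 < mid_expr x - poly_part N x"
      using main_sums[OF x, of N] sb by (metis sums_unique sums_summable suminf_pos tau_pos N1)
    thus "poly_part N x + 0 * x^(2*N+1) * tan x < mid_expr x" by simp
    define Q where "Q = (\<Sum>k. sg x k ^ (N+1))"
    define R where "R = (\<Sum>k. sg x k ^ (N+2))"
    have sQ: "(\<lambda>k. sg x k ^ (N+1)) sums Q" unfolding Q_def by (rule sg_pow_sums) simp
    have sR: "(\<lambda>k. sg x k ^ (N+2)) sums R" unfolding R_def by (rule sg_pow_sums) simp
    have Qpos: "Q > 0" unfolding Q_def using sb by (intro suminf_pos sums_summable[OF sQ]) simp
    have up1: "mid_expr x - poly_part N x \<le> vr * x^(2*N+2) + 8/3 * R"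
      using sums_le[OF _ main_sums[OF x, of N] sums_add[OF VS[OF x] sums_mult[OF sR, of "8/3"]]]
        tau_upper sb by (simp add: less_imp_le)
    have RQ: "R \<le> x^2/pi^2 * Q"
    proof (rule sums_le[OF _ sR sums_mult[OF sQ]])
      fix k
      have "sg x k * sg x k ^ (N+1) \<le> x^2/pi^2 * sg x k ^ (N+1)"
        using sg_bounds(1)[OF x, of k] sg_bounds(2)[OF x, of k] sg_bounds(3)[OF x] by (intro mult_right_mono) auto
      thus "sg x k ^ (N+2) \<le> x^2/pi^2 * sg x k ^ (N+1)" by simp
    qed
    have VQ: "3/2 * Q \<le> vr * x^(2*N+2)"
    proof (rule sums_le[OF _ sums_mult[OF sQ, of "3/2"] VS[OF x]])
      fix k show "3/2 * sg x k ^ (N+1) \<le> ee (N+1) (sg x k)"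
        using sb(1)[of k] N1 by (intro ee_lower) auto
    qed
    have tn: "x + x^3/3 \<le> tan x" using x by (intro tan_ge_cubic) auto
    have xp: "x^(2*N+1) > 0" using x by simp
    have "vr * x^(2*N+1) * (x + x^3/3) \<le> vr * x^(2*N+1) * tan x"
      using tn vr0 xp by (intro mult_left_mono) auto
    moreover have "vr * x^(2*N+1) * (x + x^3/3) = vr * x^(2*N+2) + x^2/3 * (vr * x^(2*N+2))"
      by (simp add: algebra_simps power_add power2_eq_square power3_eq_cube)
    moreover have "x^2/3 * (3/2 * Q) \<le> x^2/3 * (vr * x^(2*N+2))"
      using VQ by (intro mult_left_mono) auto
    moreover have "8/3 * R < x^2/3 * (3/2 * Q)"
    proof -
      have "8/3 * R \<le> 8/3 * (x^2/pi^2 * Q)" using RQ by (rule mult_left_mono) simp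
      also have "\<dots> < x^2/3 * (3/2 * Q)"
      proof -
        have "3*3 < pi*pi" using pi_gt3 by (intro mult_strict_mono) auto
        hence pi2: "pi^2 > 9" by (simp add: power2_eq_square)
        have x2: "x^2 > 0" using x by simp
        have "8/3 * (x^2/pi^2 * Q) = (x^2 * Q) * (8/(3*pi^2))" by (simp add: field_simps)
        also have "\<dots> < (x^2 * Q) * (1/2)"
          using x2 Qpos pi2 by (intro mult_strict_left_mono) (auto simp: field_simps)
        also have "\<dots> = x^2/3 * (3/2 * Q)" by simp
        finally show ?thesis .
      qed
      finally show ?thesis .
    qed
    ultimately show "mid_expr x < poly_part N x + vr * x^(2*N+1) * tan x"
      using up1 by linarith
  qed
  have P2: "c \<le> 0" if H: "\<forall>x::real. 0 < x \<and> x < pi/2 \<longrightarrow>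
               poly_part N x + c * x^(2*N+1) * tan x < mid_expr x" for c
  proof (rule ccontr)
    assume "\<not> c \<le> 0" hence c0: "c > 0" by simp
    define d where "d = (3/4::real)^(2*N+1)"
    have d0: "d > 0" by (simp add: d_def)
    define y where "y = max 1 (12/(c*d)) + 1"
    have y1: "y \<ge> 1" by (simp add: y_def)
    have ybig: "c * d * y > 12"
    proof -
      have "y > 12/(c*d)" by (simp add: y_def)
      thus ?thesis using c0 d0 by (simp add: field_simps)
    qed
    define x where "x = arctan y"
    have tx: "tan x = y" by (simp add: x_def tan_arctan)
    have xl: "pi/4 < x" unfolding x_def using y1 arctan_less_iff[of 1 y] arctan_one
      by (cases "y = 1") (auto simp: y_def)
    have xu: "x < pi/2" unfolding x_def by (rule arctan_ubound)
    have x34: "3/4 < x" using xl pi_gt3 by linarith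
    have x0: "0 < x" using x34 by linarith
    have x2: "x < 2" using xu pi_less_4 by linarith
    have sx: "sin x = y / sqrt (1 + y^2)" by (simp add: x_def sin_arctan)
    have sq: "sqrt (1 + y^2) \<le> 2 * y"
    proof -
      have "1 \<le> y^2" using y1 by (rule one_le_power)
      moreover have "(2*y)^2 = 4 * y^2" by (simp add: power_mult_distrib)
      ultimately have "1 + y^2 \<le> (2*y)^2" by linarith
      hence a: "sqrt (1 + y^2) \<le> sqrt ((2*y)^2)" by (rule real_sqrt_le_mono)
      have b: "sqrt ((2*y)^2) = 2*y" using y1 by (simp only: real_sqrt_abs abs_of_nonneg)
      show ?thesis using a b by linarith
    qed
    have sinx: "sin x \<ge> 1/2"
    proof -
      have sp: "sqrt (1 + y^2) > 0" by (simp add: add_pos_nonneg)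
      have "y / sqrt (1 + y^2) \<ge> y / (2*y)" using sq sp y1 by (intro divide_left_mono) auto
      thus ?thesis using sx y1 by simp
    qed
    have cosx: "cos x \<le> 1" by simp
    have mid: "mid_expr x < 12"
    proof -
      have s0: "sin x > 0" using sinx by linarith
      have "x / tan x = x * cos x / sin x" by (simp add: tan_def)
      also have "\<dots> \<le> x / sin x" using s0 x0 cosx by (intro divide_right_mono) (auto simp: mult_left_le)
      finally have "mid_expr x \<le> 3 * (x / sin x)" by (simp add: mid_expr_def)
      also have "x / sin x \<le> x / (1/2)" using sinx x0 by (intro divide_left_mono) auto
      finally show ?thesis using x2 by simp
    qed
    have "poly_part N x + c * x^(2*N+1) * tan x < mid_expr x" using H x0 xu by blast
    hence "poly_part N x + c * x^(2*N+1) * y < mid_expr x" unfolding tx .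
    hence "c * x^(2*N+1) * y < 9" using poly_ge3[of N x] mid by linarith
    moreover have "d \<le> x^(2*N+1)" unfolding d_def using x34 by (intro power_mono) auto
    hence "c * d * y \<le> c * x^(2*N+1) * y" using c0 y1 by (intro mult_right_mono mult_left_mono) auto
    ultimately show False using ybig by linarith
  qed
  have P3: "vr \<le> c" if H: "\<forall>x::real. 0 < x \<and> x < pi/2 \<longrightarrow>
               mid_expr x < poly_part N x + c * x^(2*N+1) * tan x" for c
  proof -
    have lt: "vr \<le> c * (tan x / x)" if x: "0 < x" "x < pi/2" for x
    proof -
      have "mid_expr x < poly_part N x + c * x^(2*N+1) * tan x" using H x by blast
      hence "vr * x^(2*N+2) < c * x^(2*N+1) * tan x" using lowT[OF x] by linarith
      moreover have "vr * x^(2*N+2) = (vr * x) * x^(2*N+1)" by (simp add: algebra_simps)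
      moreover have "c * x^(2*N+1) * tan x = (c * tan x) * x^(2*N+1)" by simp
      ultimately have "vr * x < c * tan x" using x by (simp add: mult_less_cancel_right)
      thus ?thesis using x by (simp add: field_simps)
    qed
    have lim: "((\<lambda>x. c * (tan x / x)) \<longlongrightarrow> c * 1) (at_right 0)"
      by (intro tendsto_intros tan_over_x_lim)
    have ev: "eventually (\<lambda>x. vr \<le> c * (tan x / x)) (at_right (0::real))"
      unfolding eventually_at_right_field
    proof (intro exI[of _ "pi/2"] conjI allI impI)
      show "(0::real) < pi/2" by simp
      fix y :: real assume "0 < y" "y < pi/2"
      thus "vr \<le> c * (tan y / y)" by (rule lt)
    qed
    show ?thesis using tendsto_lowerbound[OF lim ev] by simp
  qed
  show ?thesis using P1 P2 P3 by blast
qed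

end
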